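(* Let $n\ge2$, $\kappa\ge1$ with $n>\kappa+1$, and let $G\in\mathcal G_{[n;\kappa]}$ be skew-symmetric. Then $c_i(x)=0$ for every profile $x\in\{1,\dots,\kappa\}^n$ and every $i=1,\dots,n$.
   Context: A finite game $G\in\mathcal G_{[n;\kappa]}$ has players $\{1,\dots,n\}$, each with strategy set $\{1,\dots,\kappa\}$, and payoff functions $c_i:\{1,\dots,\kappa\}^n\to\mathbb R$. $G$ is skew-symmetric if for every permutation $\sigma\in\mathbf S_n$, every $i$ and every profile, $c_i(x_1,\dots,x_n)=\mathrm{sgn}(\sigma)\,c_{\sigma(i)}(x_{\sigma^{-1}(1)},\dots,x_{\sigma^{-1}(n)})$. *)

theory Defs
  imports Complex_Main "HOL-Combinatorics.Permutations" "HOL-Library.FuncSet"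
begin

text \<open>A game in G[n;kappa]: players {1..n}, strategies {1..kappa}; profiles are the
  extensional functions in PiE {1..n} (\<lambda>_. {1..kappa}); payoffs c :: player \<Rightarrow> profile \<Rightarrow> real.\<close>

definition profiles :: "nat \<Rightarrow> nat \<Rightarrow> (nat \<Rightarrow> nat) set" where
  "profiles n \<kappa> = PiE {1..n} (\<lambda>_. {1..\<kappa>})"

definition skew_symmetric :: "nat \<Rightarrow> nat \<Rightarrow> (nat \<Rightarrow> (nat \<Rightarrow> nat) \<Rightarrow> real) \<Rightarrow> bool" where
  "skew_symmetric n \<kappa> c \<longleftrightarrow>
     (\<forall>\<sigma>. \<sigma> permutes {1..n} \<longrightarrow>
       (\<forall>i\<in>{1..n}. \<forall>x\<in>profiles n \<kappa>.
          c i x = of_int (sign \<sigma>) * c (\<sigma> i) (x \<circ> inv \<sigma>)))"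

end

theory Submission
  imports Defs
begin

theorem proposition4p1:
  fixes n \<kappa> :: nat and c :: "nat \<Rightarrow> (nat \<Rightarrow> nat) \<Rightarrow> real"
  assumes "n \<ge> 2" and "\<kappa> \<ge> 1" and "n > \<kappa> + 1"
    and "skew_symmetric n \<kappa> c"
  shows "\<forall>x\<in>profiles n \<kappa>. \<forall>i\<in>{1..n}. c i x = 0"
proof (intro ballI)
  fix x i assume x: "x \<in> profiles n \<kappa>" and i: "i \<in> {1..n}"
  let ?A = "{1..n} - {i}"
  have cA: "card ?A = n - 1" using i by simp
  have img: "x ` ?A \<subseteq> {1..\<kappa>}" using x unfolding profiles_def by (auto simp: PiE_def Pi_def)
  have "\<not> inj_on x ?A"
  proof
    assume "inj_on x ?A"
    from card_inj_on_le[OF this img] cA assms(3) show False by simp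
  qed
  then obtain j k where jk: "j \<in> ?A" "k \<in> ?A" "j \<noteq> k" "x j = x k"
    unfolding inj_on_def by blast
  let ?s = "transpose j k"
  have p: "?s permutes {1..n}" using jk by (intro permutes_swap_id) auto
  have sg: "sign ?s = -1" using jk(3) by (simp add: sign_swap_id)
  have si: "?s i = i" using jk by auto
  have inv: "inv ?s = ?s" by simp
  have xs: "x \<circ> inv ?s = x" unfolding inv
    by (rule ext) (auto simp: transpose_def jk(4))
  have "c i x = of_int (sign ?s) * c (?s i) (x \<circ> inv ?s)"
    using assms(4) p i x unfolding skew_symmetric_def by blast
  hence "c i x = - c i x" using sg si xs by simp
  thus "c i x = 0" by simp
qed

end
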